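(* Let $\varepsilon>0$ be small, $x$ large, $0\le\theta\le\frac1{30}$, $\rho=\frac12(1-4\theta)-\varepsilon$, and $z_1\le x^{1/2}$. Let $$\mathcal{D}^{+,\mathrm{LIN}}=\{p_1\cdots p_r\le x^{\rho}:\ z_1\ge p_1>\dots>p_r,\ p_1\cdots p_{2k-2}p_{2k-1}^3\le x^{\rho}\text{ for all }k\ge1\}$$ ($p_i$ primes). Then for any $D\in[x^{1/5},x^{\rho}]$, every $d\in\mathcal{D}^{+,\mathrm{LIN}}$ can be written as $d=d_1d_2$ with positive integers $d_1,d_2$ satisfying $d_1\le D$ and $d_1d_2^2\le x^{1-4\theta-2\varepsilon^2}/D$; moreover one can take either $d_1\ge x^{0.1}$ or $d_2=1$.
   Context: Conditions in the definition of $\mathcal{D}^{+,\mathrm{LIN}}$ involving indices larger than $r$ are vacuous. *)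

theory Defs
  imports Complex_Main "HOL-Computational_Algebra.Primes"
begin

text \<open>The prime list ps is 0-indexed, so p_{2k-1} = ps ! (2k-2).\<close>
definition DLIN :: "real \<Rightarrow> real \<Rightarrow> real \<Rightarrow> nat set" where
  "DLIN x \<rho> z1 = {prod_list ps | ps.
      (\<forall>p\<in>set ps. prime p) \<and>
      sorted_wrt (>) ps \<and>
      (ps \<noteq> [] \<longrightarrow> real (hd ps) \<le> z1) \<and>
      real (prod_list ps) \<le> x powr \<rho> \<and>
      (\<forall>k::nat. 1 \<le> k \<and> 2*k - 1 \<le> length ps \<longrightarrow>
          real (prod_list (take (2*k - 2) ps) * (ps ! (2*k - 2))^3) \<le> x powr \<rho>)}"

end

theory Submission
  imports Defs
begin

lemma prod_list_pos: "\<forall>p\<in>set (ps::nat list). p > 0 \<Longrightarrow> prod_list ps > 0"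
  by (induction ps) auto

lemma prod_take_pos: "\<forall>p\<in>set (ps::nat list). p > 0 \<Longrightarrow> prod_list (take j ps) > 0"
  by (rule prod_list_pos) (auto dest: in_set_takeD)

lemma prod_take_ge_hd:
  fixes ps :: "nat list"
  assumes "\<forall>p\<in>set ps. p > 0" "0 < j" "j \<le> length ps"
  shows "ps ! 0 \<le> prod_list (take j ps)"
proof -
  obtain a t where ps: "ps = a # t" using assms by (cases ps) auto
  have "prod_list (take (j-1) t) > 0" using assms ps prod_take_pos[of t] by auto
  moreover have "take j ps = a # take (j-1) t" using ps assms(2) by (cases j) auto
  ultimately show ?thesis using ps by simp
qed

lemma greedy:
  fixes ps :: "nat list" and M N L y :: real
  assumes pos: "\<forall>p\<in>set ps. p > 0"
    and srt: "sorted_wrt (>) ps"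
    and cube: "\<forall>k::nat. 1 \<le> k \<and> 2*k - 1 \<le> length ps \<longrightarrow>
          real (prod_list (take (2*k - 2) ps) * (ps ! (2*k - 2))^3) \<le> y"
    and yMN: "y \<le> M * N" and M1: "1 \<le> M" and N1: "1 \<le> N"
    and first: "ps \<noteq> [] \<longrightarrow> real (hd ps) \<le> M"
    and LM: "L * L \<le> M" and L0: "0 < L"
  shows "j \<le> length ps \<Longrightarrow> \<exists>m n::nat. m * n = prod_list (take j ps) \<and> real m \<le> M \<and> real n \<le> N
     \<and> ((n = 1 \<and> m = prod_list (take j ps)) \<or> real m \<ge> L)"
proof (induction j)
  case 0
  then show ?case using M1 N1 by (intro exI[of _ 1]) auto
next
  case (Suc j)
  then obtain m n :: nat where mn: "m * n = prod_list (take j ps)" "real m \<le> M" "real n \<le> N"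
     "(n = 1 \<and> m = prod_list (take j ps)) \<or> real m \<ge> L" by auto
  define p where "p = ps ! j"
  have jl: "j < length ps" using Suc by simp
  have tk: "take (Suc j) ps = take j ps @ [p]" using jl p_def by (simp add: take_Suc_conv_app_nth)
  have ppos: "p > 0" using pos jl p_def by auto
  have prodpos: "prod_list (take j ps) > 0" using pos prod_take_pos by auto
  show ?case
  proof (cases "real (m * p) \<le> M")
    case True
    have "m \<le> m * p" using ppos by simp
    then have "real m \<le> real (m * p)" by (simp only: of_nat_le_iff)
    then show ?thesis using True mn tk ppos
      by (intro exI[of _ "m*p"] exI[of _ n]) (auto simp: algebra_simps)
  next
    case F1: False
    show ?thesis
    proof (cases "real (n * p) \<le> N")
      case True
      have "real m \<ge> L"
      proof (cases "real m \<ge> L")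
        case False
        then have n1: "n = 1" "m = prod_list (take j ps)" using mn by auto
        show ?thesis
        proof (cases "j = 0")
          case True
          then have "m = 1" using n1 by simp
          moreover have "hd ps = p" using True p_def jl by (cases ps) auto
          ultimately show ?thesis using F1 first jl by auto
        next
          case False
          have h0: "ps ! 0 \<le> m" using prod_take_ge_hd[OF pos, of j] False jl n1 by auto
          have h1: "ps ! 0 > p" using srt jl False p_def by (simp add: sorted_wrt_iff_nth_less)
          have mpos: "real m > 0" using n1 prodpos by simp
          have "real m * real p > L * L" using F1 LM by simp
          moreover have "real m < L" using \<open>\<not> L \<le> real m\<close> by simp
          ultimately have "real p > L"
            by (smt (verit) L0 mpos mult_mono mult_nonneg_nonneg of_nat_0_le_iff)
          then show ?thesis using h0 h1 by linarith
        qed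
      qed
      then show ?thesis using True mn tk
        by (intro exI[of _ m] exI[of _ "n*p"]) (auto simp: algebra_simps)
    next
      case F2: False
      have big: "real (prod_list (take j ps)) * real p ^ 2 > y"
      proof -
        have "real m * real p > M" "real n * real p > N" using F1 F2 by auto
        moreover have "M > 0" "N > 0" using M1 N1 by auto
        ultimately have "(real m * real p) * (real n * real p) > M * N"
          by (smt (verit) mult_strict_mono)
        then show ?thesis using yMN mn(1)[symmetric] by (simp add: power2_eq_square algebra_simps)
      qed
      show ?thesis
      proof (cases "even j")
        case True
        then obtain k where k: "j = 2*k" by blast
        have "real (prod_list (take (2*(k+1) - 2) ps) * (ps ! (2*(k+1) - 2))^3) \<le> y"
          using cube[rule_format, of "k+1"] jl k by auto
        then have c: "real (prod_list (take j ps)) * real p ^ 3 \<le> y" using k p_def by simp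
        have "real p ^ 2 \<le> real p ^ 3" using ppos by (simp add: power_increasing)
        then have "real (prod_list (take j ps)) * real p ^ 2 \<le> real (prod_list (take j ps)) * real p ^ 3"
          by (intro mult_left_mono) auto
        then show ?thesis using c big by linarith
      next
        case False
        then obtain k where k: "j = 2*k + 1" using oddE by blast
        define q where "q = ps ! (2*k)"
        have "real (prod_list (take (2*(k+1) - 2) ps) * (ps ! (2*(k+1) - 2))^3) \<le> y"
          using cube[rule_format, of "k+1"] jl k by auto
        then have c: "real (prod_list (take (2*k) ps)) * real q ^ 3 \<le> y" using q_def by simp
        have tq: "take j ps = take (2*k) ps @ [q]" using k jl q_def by (simp add: take_Suc_conv_app_nth)
        have qp: "q > p" using srt jl k p_def q_def by (simp add: sorted_wrt_iff_nth_less)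
        have "real q * real p ^ 2 \<le> real q ^ 3"
        proof -
          have "real p ^ 2 \<le> real q ^ 2" using qp by (intro power_mono) auto
          then have "real q * real p ^ 2 \<le> real q * real q ^ 2" by (intro mult_left_mono) auto
          then show ?thesis by (simp add: power2_eq_square power3_eq_cube)
        qed
        then have "real (prod_list (take (2*k) ps)) * (real q * real p ^ 2)
            \<le> real (prod_list (take (2*k) ps)) * real q ^ 3" by (intro mult_left_mono) auto
        then show ?thesis using c big tq by (simp add: algebra_simps)
      qed
    qed
  qed
qed


theorem lemma9:
  "\<exists>\<epsilon>0>0. \<forall>\<epsilon>::real. 0 < \<epsilon> \<and> \<epsilon> < \<epsilon>0 \<longrightarrow>
     (\<exists>x0. \<forall>x::real. x \<ge> x0 \<longrightarrow>
       (\<forall>\<theta>::real. \<forall>z1::real. \<forall>D::real. \<forall>d::nat.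
          0 \<le> \<theta> \<and> \<theta> \<le> 1/30 \<and> z1 \<le> x powr (1/2) \<and>
          x powr (1/5) \<le> D \<and> D \<le> x powr ((1 - 4*\<theta>)/2 - \<epsilon>) \<and>
          d \<in> DLIN x ((1 - 4*\<theta>)/2 - \<epsilon>) z1 \<longrightarrow>
          (\<exists>d1 d2::nat. d = d1 * d2 \<and> 0 < d1 \<and> 0 < d2 \<and>
             real d1 \<le> D \<and>
             real (d1 * d2^2) \<le> x powr (1 - 4*\<theta> - 2*\<epsilon>^2) / D \<and>
             (real d1 \<ge> x powr (1/10) \<or> d2 = 1))))"
proof (rule exI[of _ 1], rule conjI, simp, intro allI impI)
  fix \<epsilon> :: real assume e: "0 < \<epsilon> \<and> \<epsilon> < 1"
  show "\<exists>x0. \<forall>x::real. x \<ge> x0 \<longrightarrow>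
       (\<forall>\<theta>::real. \<forall>z1::real. \<forall>D::real. \<forall>d::nat.
          0 \<le> \<theta> \<and> \<theta> \<le> 1/30 \<and> z1 \<le> x powr (1/2) \<and>
          x powr (1/5) \<le> D \<and> D \<le> x powr ((1 - 4*\<theta>)/2 - \<epsilon>) \<and>
          d \<in> DLIN x ((1 - 4*\<theta>)/2 - \<epsilon>) z1 \<longrightarrow>
          (\<exists>d1 d2::nat. d = d1 * d2 \<and> 0 < d1 \<and> 0 < d2 \<and>
             real d1 \<le> D \<and>
             real (d1 * d2^2) \<le> x powr (1 - 4*\<theta> - 2*\<epsilon>^2) / D \<and>
             (real d1 \<ge> x powr (1/10) \<or> d2 = 1)))"
  proof (rule exI[of _ 1], intro allI impI)
    fix x \<theta> z1 D :: real and d :: nat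
    assume x1: "1 \<le> x"
    assume H: "0 \<le> \<theta> \<and> \<theta> \<le> 1/30 \<and> z1 \<le> x powr (1/2) \<and>
          x powr (1/5) \<le> D \<and> D \<le> x powr ((1 - 4*\<theta>)/2 - \<epsilon>) \<and>
          d \<in> DLIN x ((1 - 4*\<theta>)/2 - \<epsilon>) z1"
    define \<rho> where "\<rho> = (1 - 4*\<theta>)/2 - \<epsilon>"
    define X where "X = x powr \<rho>"
    have x0: "x > 0" using x1 by simp
    have DX: "x powr (1/5) \<le> D" "D \<le> X" using H by (auto simp: X_def \<rho>_def)
    have D1: "1 \<le> D" using ge_one_powr_ge_zero[OF x1, of "1/5"] DX by linarith
    have XD: "1 \<le> X / D" using DX D1 by simp
    have rho: "\<rho> \<le> 1/2"
    proof -
      have "0 \<le> \<theta>" "0 < \<epsilon>" using H e by auto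
      then show ?thesis unfolding \<rho>_def by (simp add: field_simps)
    qed
    have Xh: "X \<le> x powr (1/2)" unfolding X_def using rho x1 by (intro powr_mono) auto
    obtain ps where ps: "d = prod_list ps" "\<forall>p\<in>set ps. prime p" "sorted_wrt (>) ps"
      "real (prod_list ps) \<le> X"
      "\<forall>k::nat. 1 \<le> k \<and> 2*k - 1 \<le> length ps \<longrightarrow>
          real (prod_list (take (2*k - 2) ps) * (ps ! (2*k - 2))^3) \<le> X"
      using H unfolding DLIN_def X_def \<rho>_def by blast
    have pos: "\<forall>p\<in>set ps. p > 0" using ps(2) prime_gt_0_nat by blast
    have first: "ps \<noteq> [] \<longrightarrow> real (hd ps) \<le> D"
    proof
      assume ne: "ps \<noteq> []"
      have "real ((ps ! 0)^3) \<le> X" using ps(5)[rule_format, of 1] ne by (simp add: Suc_le_eq)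
      then have c: "real (hd ps) ^ 3 \<le> x powr (1/2)" using Xh ne by (simp add: hd_conv_nth)
      show "real (hd ps) \<le> D"
      proof (rule ccontr)
        assume "\<not> real (hd ps) \<le> D"
        then have "real (hd ps) > x powr (1/5)" using DX by simp
        then have a: "real (hd ps) ^ 3 > (x powr (1/5)) ^ 3"
          by (intro power_strict_mono) auto
        have b: "(x powr (1/5)) ^ 3 = x powr (3/5)"
          using x0 by (simp add: powr_realpow[symmetric] powr_powr)
        have "x powr (3/5) \<ge> x powr (1/2)" using x1 by (intro powr_mono) auto
        then show False using a b c by linarith
      qed
    qed
    have LM: "x powr (1/10) * x powr (1/10) \<le> D"
      using DX by (simp add: powr_add[symmetric])
    obtain m n :: nat where mn: "m * n = prod_list ps" "real m \<le> D" "real n \<le> X / D"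
      "(n = 1 \<and> m = prod_list ps) \<or> real m \<ge> x powr (1/10)"
      using greedy[OF pos ps(3) ps(5), of D "X/D" "x powr (1/10)" "length ps"] D1 XD first LM x0
      by auto
    have dpos: "d > 0" using ps(1) prod_list_pos[OF pos] by simp
    have m0: "m > 0" "n > 0" using dpos mn(1) ps(1) by (metis nat_0_less_mult_iff)+
    have "m * n^2 = d * n" using mn(1) ps(1) by (simp add: power2_eq_square)
    then have "real (m * n^2) = real d * real n" by (metis of_nat_mult)
    also have "\<dots> \<le> X * (X / D)" using ps(1,4) mn(3) by (intro mult_mono) auto
    also have "X * (X / D) = x powr (1 - 4*\<theta> - 2*\<epsilon>) / D"
      unfolding X_def \<rho>_def by (simp add: powr_add[symmetric])
    also have "\<dots> \<le> x powr (1 - 4*\<theta> - 2*\<epsilon>^2) / D"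
    proof -
      have "\<epsilon>^2 \<le> \<epsilon>" using e by (simp add: power2_eq_square mult_le_cancel_right1 less_imp_le)
      then have "x powr (1 - 4*\<theta> - 2*\<epsilon>) \<le> x powr (1 - 4*\<theta> - 2*\<epsilon>^2)"
        using x1 by (intro powr_mono) auto
      then show ?thesis using D1 by (intro divide_right_mono) auto
    qed
    finally have fin: "real (m * n^2) \<le> x powr (1 - 4*\<theta> - 2*\<epsilon>^2) / D" .
    show "\<exists>d1 d2::nat. d = d1 * d2 \<and> 0 < d1 \<and> 0 < d2 \<and>
             real d1 \<le> D \<and>
             real (d1 * d2^2) \<le> x powr (1 - 4*\<theta> - 2*\<epsilon>^2) / D \<and>
             (real d1 \<ge> x powr (1/10) \<or> d2 = 1)"
      using mn m0 fin ps(1) by (intro exI[of _ m] exI[of _ n]) auto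
  qed
qed

end
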